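(* Let $M,N$ be integers, let $m_0$ be a trigonometric polynomial with $m_0(0)=1$, let $C\in\mathbb{R}$, and let $$\widehat\phi(\xi)=C\prod_{j=0}^{\infty}m_0\Big(\frac{\xi}{p^{N-j}}\Big),\qquad \xi\in\mathbb{Q}_p .$$ If $\operatorname{supp}\widehat\phi\subset B_M(0)$, then there exist at most $\frac{\deg m_0}{p-1}$ integers $n$ such that $0\le n<p^{M+N}$ and $\widehat\phi\big(\frac{n}{p^M}\big)\ne0$.
   Context: $p$ is a prime, $\mathbb{Q}_p$ the field of $p$-adic numbers with norm $|\cdot|_p$; $B_M(0)=\{\xi:|\xi|_p\le p^M\}$. The fractional part of $x=p^{\gamma}\sum_{j\ge0}x_jp^j$ ($x_j\in\{0,\dots,p-1\}$, $x_0\ne0$) is $\{x\}_p=p^{\gamma}\sum_{j=0}^{-\gamma-1}x_jp^j$, $\{0\}_p=0$, and $\chi_p(x)=e^{2\pi i\{x\}_p}$. A trigonometric polynomial is a function $m(\xi)=\sum_{k=0}^{K}c_k\chi_p(k\xi)$ with $c_k\in\mathbb{C}$; its degree $\deg m$ is the largest $k$ with $c_k\ne0$. *)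

theory Defs
  imports "HOL-Analysis.Analysis" "HOL-Computational_Algebra.Primes"
begin

text \<open>p-adic numbers are represented by their digit sequences:
  x = sum over j of d j * p^j, with digits d j in {0..p-1} and d j = 0 for all
  sufficiently negative j.\<close>

definition Qp :: "nat \<Rightarrow> (int \<Rightarrow> nat) set" where
  "Qp p = {d. (\<forall>j. d j < p) \<and> (\<exists>g. \<forall>j<g. d j = 0)}"

definition padic_trunc :: "nat \<Rightarrow> (int \<Rightarrow> nat) \<Rightarrow> int \<Rightarrow> real" where
  "padic_trunc p d n = (\<Sum>j\<in>{j. j < n \<and> d j \<noteq> 0}. real (d j) * real p powi j)"

definition padic_frac :: "nat \<Rightarrow> (int \<Rightarrow> nat) \<Rightarrow> real" where
  "padic_frac p d = padic_trunc p d 0"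

definition padic_chi :: "nat \<Rightarrow> (int \<Rightarrow> nat) \<Rightarrow> complex" where
  "padic_chi p d = exp (2 * pi * \<i> * complex_of_real (padic_frac p d))"

definition padic_val :: "(int \<Rightarrow> nat) \<Rightarrow> int" where
  "padic_val d = (THE v. d v \<noteq> 0 \<and> (\<forall>j<v. d j = 0))"

definition padic_norm :: "nat \<Rightarrow> (int \<Rightarrow> nat) \<Rightarrow> real" where
  "padic_norm p d = (if (\<forall>j. d j = 0) then 0 else real p powi (- padic_val d))"

text \<open>Multiplication by p^e (e an integer): shift of digits.\<close>
definition padic_pshift :: "int \<Rightarrow> (int \<Rightarrow> nat) \<Rightarrow> (int \<Rightarrow> nat)" where
  "padic_pshift e d = (\<lambda>j. d (j - e))"

text \<open>Multiplication by a natural number k: the truncation of k*x below p^(j+1) is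
  (k * trunc x (j+1)) mod p^(j+1); digit j is obtained from it.\<close>
definition rmod :: "real \<Rightarrow> real \<Rightarrow> real" where
  "rmod a b = a - b * of_int \<lfloor>a / b\<rfloor>"

definition padic_smult :: "nat \<Rightarrow> nat \<Rightarrow> (int \<Rightarrow> nat) \<Rightarrow> (int \<Rightarrow> nat)" where
  "padic_smult p k d = (\<lambda>j. nat \<lfloor>rmod (real k * padic_trunc p d (j + 1)) (real p powi (j + 1))
                                / real p powi j\<rfloor>)"

definition padic_of_nat :: "nat \<Rightarrow> nat \<Rightarrow> (int \<Rightarrow> nat)" where
  "padic_of_nat p n = (\<lambda>j. if j < 0 then 0 else (n div p ^ nat j) mod p)"

definition trig_poly :: "nat \<Rightarrow> nat \<Rightarrow> (nat \<Rightarrow> complex) \<Rightarrow> (int \<Rightarrow> nat) \<Rightarrow> complex" where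
  "trig_poly p K c xi = (\<Sum>k\<le>K. c k * padic_chi p (padic_smult p k xi))"

definition trig_deg :: "nat \<Rightarrow> (nat \<Rightarrow> complex) \<Rightarrow> nat" where
  "trig_deg K c = Max {k. k \<le> K \<and> c k \<noteq> 0}"

text \<open>phi-hat(xi) = C * prod_{j>=0} m0(xi / p^(N-j)) = C * prod m0(p^(j-N) xi).\<close>
definition phi_hat :: "nat \<Rightarrow> nat \<Rightarrow> (nat \<Rightarrow> complex) \<Rightarrow> real \<Rightarrow> int \<Rightarrow> (int \<Rightarrow> nat) \<Rightarrow> complex" where
  "phi_hat p K c C N xi =
     complex_of_real C * (\<Prod>j. trig_poly p K c (padic_pshift (int j - N) xi))"

end

theory Submission
  imports Defs "HOL-Computational_Algebra.Polynomial"
begin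

definition dig :: "nat \<Rightarrow> nat \<Rightarrow> nat \<Rightarrow> nat" where
  "dig p b i = (b div p ^ i) mod p"

lemma digit_sum: "(\<Sum>i<m. dig p b i * p ^ i) = b mod p ^ m"
proof (induction m)
  case 0 then show ?case by simp
next
  case (Suc m)
  have "b mod p ^ Suc m = p ^ m * (b div p ^ m mod p) + b mod p ^ m"
    by (metis mod_mult2_eq power_Suc2)
  then show ?case using Suc by (simp add: dig_def)
qed

lemma mod_pow_div: "(a mod (p ^ Suc i)) div p ^ i = (a div p ^ i) mod (p::nat)"
proof (cases "p = 0")
  case True then show ?thesis by (cases i) auto
next
  case False
  have "a mod p ^ Suc i = p ^ i * (a div p ^ i mod p) + a mod p ^ i"
    by (metis mod_mult2_eq power_Suc2)
  moreover have "a mod p ^ i < p ^ i" using False by simp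
  ultimately show ?thesis using False by simp
qed

lemma pshift_of_nat:
  "padic_pshift (-s) (padic_of_nat p b) j = (if j + s < 0 then 0 else dig p b (nat (j + s)))"
  by (simp add: padic_pshift_def padic_of_nat_def dig_def)

lemma trunc_shift:
  assumes p: "p > 0"
  shows "padic_trunc p (padic_pshift (-s) (padic_of_nat p b)) n
     = real (b mod p ^ nat (n + s)) * real p powi (-s)"
proof -
  let ?d = "padic_pshift (-s) (padic_of_nat p b)"
  define m where "m = nat (n + s)"
  have seteq: "{j. j < n \<and> ?d j \<noteq> 0} = (\<lambda>i. int i - s) ` {i. i < m \<and> dig p b i \<noteq> 0}"
  proof (rule set_eqI, rule iffI)
    fix j assume "j \<in> {j. j < n \<and> ?d j \<noteq> 0}"
    then have "j < n" "\<not> j + s < 0" "dig p b (nat (j+s)) \<noteq> 0"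
      by (auto simp: pshift_of_nat split: if_splits)
    then show "j \<in> (\<lambda>i. int i - s) ` {i. i < m \<and> dig p b i \<noteq> 0}"
      unfolding m_def by (intro image_eqI[of _ _ "nat (j+s)"]) auto
  next
    fix j assume "j \<in> (\<lambda>i. int i - s) ` {i. i < m \<and> dig p b i \<noteq> 0}"
    then obtain i where "j = int i - s" "i < m" "dig p b i \<noteq> 0" by auto
    then show "j \<in> {j. j < n \<and> ?d j \<noteq> 0}" unfolding m_def
      by (auto simp: pshift_of_nat)
  qed
  have "padic_trunc p ?d n = (\<Sum>j\<in>(\<lambda>i. int i - s) ` {i. i < m \<and> dig p b i \<noteq> 0}. real (?d j) * real p powi j)"
    unfolding padic_trunc_def seteq ..
  also have "\<dots> = (\<Sum>i\<in>{i. i < m \<and> dig p b i \<noteq> 0}. real (dig p b i) * real p powi (int i - s))"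
    by (subst sum.reindex) (auto simp: inj_on_def pshift_of_nat)
  also have "\<dots> = (\<Sum>i<m. real (dig p b i) * real p powi (int i - s))"
    by (rule sum.mono_neutral_left) auto
  also have "\<dots> = (\<Sum>i<m. real (dig p b i * p ^ i)) * real p powi (-s)"
    unfolding sum_distrib_right
    by (rule sum.cong) (use p in \<open>auto simp: power_int_diff power_int_minus divide_inverse\<close>)
  also have "\<dots> = real (b mod p ^ m) * real p powi (-s)"
    by (simp only: of_nat_sum[symmetric] digit_sum)
  finally show ?thesis unfolding m_def .
qed

lemma floor_nat_div: "\<lfloor>real (u::nat) / real v\<rfloor> = int (u div v)"
  by (metis floor_divide_of_nat_eq of_int_of_nat_eq)

lemma floor_nat_div_pow: "\<lfloor>real (u::nat) / real v ^ i\<rfloor> = int (u div v ^ i)"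
  by (metis floor_nat_div of_nat_power)

lemma smult_shift:
  assumes p: "p > 0"
  shows "padic_smult p k (padic_pshift (-s) (padic_of_nat p b)) = padic_pshift (-s) (padic_of_nat p (k*b))"
proof
  fix j
  let ?P = "real p"
  have P0: "?P \<noteq> 0" using p by simp
  show "padic_smult p k (padic_pshift (-s) (padic_of_nat p b)) j = padic_pshift (-s) (padic_of_nat p (k*b)) j"
  proof (cases "j + s < 0")
    case True
    then have "nat (j + 1 + s) = 0" by simp
    then show ?thesis using True
      by (simp add: padic_smult_def trunc_shift[OF p] rmod_def pshift_of_nat)
  next
    case False
    define i where "i = nat (j + s)"
    have ji: "j = int i - s" using False i_def by simp
    have q: "nat (j + 1 + s) = Suc i" using False i_def by simp
    define w where "w = k * (b mod p ^ Suc i)"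
    have pj1: "?P powi (j+1) = real (p ^ Suc i) * ?P powi (-s)"
    proof -
      have "j + 1 = int (Suc i) + (-s)" using ji by simp
      have "?P powi (int (Suc i) + (-s)) = ?P powi (int (Suc i)) * ?P powi (-s)"
        by (rule power_int_add) (use P0 in simp)
      then show ?thesis using \<open>j + 1 = int (Suc i) + (-s)\<close> by (simp only: power_int_of_nat of_nat_power)
    qed
    have pj: "?P powi j = real (p ^ i) * ?P powi (-s)"
    proof -
      have "?P powi (int i + (-s)) = ?P powi (int i) * ?P powi (-s)"
        by (rule power_int_add) (use P0 in simp)
      then show ?thesis using ji by (simp only: power_int_of_nat of_nat_power diff_conv_add_uminus)
    qed
    have ps: "?P powi (-s) \<noteq> 0" using P0 by simp
    have x: "real k * padic_trunc p (padic_pshift (-s) (padic_of_nat p b)) (j+1) = real w * ?P powi (-s)"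
      unfolding trunc_shift[OF p] q w_def by simp
    have "rmod (real w * ?P powi (-s)) (?P powi (j+1)) = real (w mod p ^ Suc i) * ?P powi (-s)"
    proof -
      have "real w * ?P powi (-s) / ?P powi (j+1) = real w / real (p ^ Suc i)"
        unfolding pj1 using ps by (simp add: field_simps)
      then have fl: "\<lfloor>real w * ?P powi (-s) / ?P powi (j+1)\<rfloor> = int (w div p ^ Suc i)"
        by (simp only: floor_nat_div)
      have "rmod (real w * ?P powi (-s)) (?P powi (j+1)) =
          real w * ?P powi (-s) - real (p ^ Suc i) * ?P powi (-s) * real (w div p ^ Suc i)"
        unfolding rmod_def fl by (simp only: pj1 of_int_of_nat_eq)
      also have "\<dots> = real (w mod p ^ Suc i) * ?P powi (-s)"
      proof -
        have "real w = real (p ^ Suc i) * real (w div p ^ Suc i) + real (w mod p ^ Suc i)"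
          by (metis div_mult_mod_eq of_nat_add of_nat_mult mult.commute)
        then show ?thesis by (simp only: algebra_simps)
      qed
      finally show ?thesis .
    qed
    moreover have "real (w mod p ^ Suc i) * ?P powi (-s) / ?P powi j = real (w mod p ^ Suc i) / real (p ^ i)"
      unfolding pj using ps by (simp add: field_simps)
    moreover have "w mod p ^ Suc i = (k*b) mod p ^ Suc i"
      unfolding w_def by (simp add: mod_mult_right_eq)
    ultimately have "padic_smult p k (padic_pshift (-s) (padic_of_nat p b)) j = (k*b) mod p ^ Suc i div p ^ i"
      unfolding padic_smult_def x floor_nat_div by (simp add: floor_nat_div_pow)
    also have "\<dots> = dig p (k*b) i" unfolding dig_def by (rule mod_pow_div)
    finally show ?thesis using False by (simp add: pshift_of_nat i_def)
  qed
qed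

definition E :: "real \<Rightarrow> complex" where
  "E t = exp (2 * pi * \<i> * complex_of_real t)"

lemma E_int: "E (x + of_int m) = E x"
proof -
  have "E (x + of_int m) = E x * exp ((2 * of_int m * pi) * \<i>)"
  proof -
    have "2*pi*\<i>*complex_of_real (x + of_int m) = 2*pi*\<i>*complex_of_real x + (2 * of_int m * pi) * \<i>"
      by (simp add: algebra_simps)
    then show ?thesis unfolding E_def by (simp only: exp_add)
  qed
  also have "exp ((2 * of_int m * pi) * \<i>) = 1"
    by (rule exp_integer_2pi) simp
  finally show ?thesis by simp
qed

lemma E_diff_int: "x - y = of_int m \<Longrightarrow> E x = E y"
  using E_int[of y m] by (simp add: algebra_simps)

lemma frac_shift:
  assumes p: "p > 0"
  shows "padic_frac p (padic_pshift (-s) (padic_of_nat p b)) = real (b mod p ^ nat s) * real p powi (-s)"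
  unfolding padic_frac_def trunc_shift[OF p] by simp

lemma chi_shift:
  assumes p: "p > 0"
  shows "padic_chi p (padic_pshift (-s) (padic_of_nat p b)) = E (real b * real p powi (-s))"
proof -
  have "\<exists>m. real b * real p powi (-s) - real (b mod p ^ nat s) * real p powi (-s) = of_int m"
  proof (cases "s \<ge> 0")
    case True
    have "real b - real (b mod p ^ nat s) = real (p ^ nat s) * real (b div p ^ nat s)"
      by (metis add_diff_cancel_right' div_mult_mod_eq mult.commute of_nat_add of_nat_mult)
    moreover have "real (p ^ nat s) * real p powi (-s) = 1"
    proof -
      have "real p powi (-s) = inverse (real p ^ nat s)"
        using True by (simp add: power_int_minus power_int_nonneg_exp)
      then show ?thesis using p by simp
    qed
    ultimately have "real b * real p powi (-s) - real (b mod p ^ nat s) * real p powi (-s)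
        = real (b div p ^ nat s)"
      by (metis left_diff_distrib mult.commute mult.left_commute mult_1_right)
    then show ?thesis by (metis of_int_of_nat_eq)
  next
    case False
    then have "real p powi (-s) = real (p ^ nat (-s))" by (simp add: power_int_def)
    then show ?thesis using False by (intro exI[of _ "int (b * p ^ nat (-s))"]) simp
  qed
  then obtain m where "real b * real p powi (-s) - real (b mod p ^ nat s) * real p powi (-s) = of_int m" by blast
  from E_diff_int[OF this] show ?thesis
    unfolding padic_chi_def frac_shift[OF p] E_def by simp
qed

definition g :: "nat \<Rightarrow> (nat \<Rightarrow> complex) \<Rightarrow> real \<Rightarrow> complex" where
  "g K c y = (\<Sum>k\<le>K. c k * E (real k * y))"

lemma trig_shift:
  assumes p: "p > 0"
  shows "trig_poly p K c (padic_pshift (-s) (padic_of_nat p b)) = g K c (real b * real p powi (-s))"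
  unfolding trig_poly_def g_def smult_shift[OF p] chi_shift[OF p] by (simp add: mult.assoc)

lemma g_int: "g K c (y + of_int m) = g K c y"
  unfolding g_def
proof (rule sum.cong[OF refl])
  fix k
  have "E (real k * (y + of_int m)) = E (real k * y + of_int (int k * m))"
    by (simp add: algebra_simps)
  also have "\<dots> = E (real k * y)" by (rule E_int)
  finally show "c k * E (real k * (y + of_int m)) = c k * E (real k * y)" by simp
qed

lemma g_zero_fun:
  assumes p: "p > 0"
  shows "trig_poly p K c (\<lambda>_. 0) = g K c 0"
proof -
  have "(\<lambda>_. 0) = padic_pshift (-0) (padic_of_nat p 0)"
    by (auto simp: padic_pshift_def padic_of_nat_def)
  then show ?thesis using trig_shift[OF p, of K c 0 0] by simp
qed

lemma g_of_int:
  assumes "g K c 0 = 1"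
  shows "g K c (of_int m) = 1"
  using g_int[of K c 0 m] assms by simp

lemma pshift_pshift: "padic_pshift a (padic_pshift b d) = padic_pshift (a + b) d"
  by (simp add: padic_pshift_def algebra_simps)

lemma phi_shift:
  assumes p: "p > 0" and g1: "g K c 0 = 1" and J: "int J \<ge> N + e"
  shows "phi_hat p K c C N (padic_pshift (-e) (padic_of_nat p a))
      = complex_of_real C * (\<Prod>j<J. g K c (real a * real p powi (int j - N - e)))"
proof -
  define f where "f j = trig_poly p K c (padic_pshift (int j - N) (padic_pshift (-e) (padic_of_nat p a)))" for j
  have fj: "f j = g K c (real a * real p powi (int j - N - e))" for j
  proof -
    have "padic_pshift (int j - N) (padic_pshift (-e) (padic_of_nat p a))
        = padic_pshift (-(e + N - int j)) (padic_of_nat p a)"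
      by (simp add: pshift_pshift algebra_simps)
    moreover have "trig_poly p K c (padic_pshift (-(e + N - int j)) (padic_of_nat p a))
       = g K c (real a * real p powi (-(e + N - int j)))" by (rule trig_shift[OF p])
    ultimately show ?thesis unfolding f_def by (simp add: algebra_simps)
  qed
  have f1: "f j = 1" if "j \<notin> {..<J}" for j
  proof -
    have nn: "int j - N - e \<ge> 0" using that J by simp
    have "real p powi (int j - N - e) = real (p ^ nat (int j - N - e))"
      using nn by (simp add: power_int_nonneg_exp)
    then have "real a * real p powi (int j - N - e) = of_int (int (a * p ^ nat (int j - N - e)))"
      by simp
    then show ?thesis unfolding fj by (simp only: g_of_int[OF g1])
  qed
  have "f has_prod (\<Prod>j<J. f j)"
    by (rule has_prod_finite) (use f1 in auto)
  then have "(\<Prod>j. f j) = (\<Prod>j<J. f j)" by (metis has_prod_unique)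
  then show ?thesis unfolding phi_hat_def f_def[symmetric] by (simp add: fj)
qed

definition Gf :: "nat \<Rightarrow> nat \<Rightarrow> (nat \<Rightarrow> complex) \<Rightarrow> nat \<Rightarrow> nat \<Rightarrow> complex" where
  "Gf p K0 c K a = (\<Prod>j<K. g K0 c (real a * real p powi (int j - int K)))"

definition hf :: "nat \<Rightarrow> nat \<Rightarrow> (nat \<Rightarrow> complex) \<Rightarrow> nat \<Rightarrow> nat \<Rightarrow> complex" where
  "hf p K0 c K a = g K0 c (real a * real p powi (- int K))"

lemma G_step:
  assumes p: "p > 0" and g1: "g K0 c 0 = 1" and K: "K = Suc K'"
  shows "Gf p K0 c K a = hf p K0 c K a * Gf p K0 c K ((p * a) mod p ^ K)"
proof -
  define f where "f j = g K0 c (real a * real p powi (int j - int K))" for j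
  have P0: "real p \<noteq> 0" using p by simp
  have "Gf p K0 c K ((p * a) mod p ^ K) = (\<Prod>j<K. f (Suc j))"
    unfolding Gf_def
  proof (rule prod.cong[OF refl])
    fix j assume "j \<in> {..<K}"
    define q where "q = (p * a) div p ^ K"
    have r: "real ((p * a) mod p ^ K) = real p * real a - real (p ^ K) * real q"
      unfolding q_def by (metis add_diff_cancel_left' div_mult_mod_eq mult.commute of_nat_add of_nat_mult)
    have pk: "real (p ^ K) * real p powi (int j - int K) = real (p ^ j)"
    proof -
      have "real p powi (int K + (int j - int K)) = real p powi (int K) * real p powi (int j - int K)"
        by (rule power_int_add) (use P0 in simp)
      then show ?thesis by (simp add: power_int_of_nat)
    qed
    have pp: "real p * real p powi (int j - int K) = real p powi (int (Suc j) - int K)"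
    proof -
      have "real p powi (1 + (int j - int K)) = real p powi 1 * real p powi (int j - int K)"
        by (rule power_int_add) (use P0 in simp)
      then show ?thesis by (simp add: algebra_simps)
    qed
    have "real ((p * a) mod p ^ K) * real p powi (int j - int K)
        = real a * real p powi (int (Suc j) - int K) + of_int (- int (q * p ^ j))"
      unfolding r using pk pp by (simp add: algebra_simps)
    then show "g K0 c (real ((p * a) mod p ^ K) * real p powi (int j - int K)) = f (Suc j)"
      unfolding f_def by (simp only: g_int)
  qed
  also have "\<dots> = (\<Prod>j<K'. f (Suc j)) * f (Suc K')"
    unfolding K by simp
  also have "f (Suc K') = 1"
    unfolding f_def K using g_of_int[OF g1, of "int a"] by simp
  finally have 1: "Gf p K0 c K ((p * a) mod p ^ K) = (\<Prod>j<K'. f (Suc j))" by simp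
  have "Gf p K0 c K a = (\<Prod>j<Suc K'. f j)"
    unfolding Gf_def f_def K ..
  also have "\<dots> = f 0 * (\<Prod>j<K'. f (Suc j))" by (rule prod.lessThan_Suc_shift)
  finally have "Gf p K0 c K a = f 0 * (\<Prod>j<K'. f (Suc j))" .
  moreover have "f 0 = hf p K0 c K a" unfolding f_def hf_def by simp
  ultimately show ?thesis using 1 by simp
qed

lemma trig_deg_ge:
  assumes "k \<le> K0" "c k \<noteq> 0"
  shows "k \<le> trig_deg K0 c"
  unfolding trig_deg_def using assms by (intro Max_ge) auto

lemma cancel_2pii:
  fixes u v :: complex
  assumes "2 * pi * \<i> * u = 2 * pi * \<i> * v + of_int (2 * n) * pi * \<i>"
  shows "u = v + of_int n"
proof -
  have "(2 * pi * \<i>) * (u - (v + of_int n)) = 0" using assms by (simp add: algebra_simps)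
  moreover have "2 * pi * \<i> \<noteq> 0" by simp
  ultimately show ?thesis by simp
qed

lemma roots_bound:
  assumes p: "p > 0" and g1: "g K0 c 0 = 1"
  shows "card {z. z < p ^ K \<and> hf p K0 c K z = 0} \<le> trig_deg K0 c"
proof -
  define Q where "Q = (\<Sum>k\<le>K0. monom (c k) k)"
  define F where "F z = E (real z * real p powi (- int K))" for z :: nat
  have poly: "hf p K0 c K z = poly Q (F z)" for z
    unfolding hf_def g_def Q_def F_def poly_sum poly_monom E_def
    by (rule sum.cong[OF refl]) (simp add: exp_of_nat_mult[symmetric] algebra_simps)
  have Q0: "Q \<noteq> 0"
  proof
    assume "Q = 0"
    then have "hf p K0 c K 0 = 0" using poly[of 0] by simp
    then show False using g1 by (simp add: hf_def)
  qed
  have deg: "degree Q \<le> trig_deg K0 c"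
  proof (rule degree_le, intro allI impI)
    fix i assume i: "trig_deg K0 c < i"
    have "coeff Q i = (\<Sum>k\<le>K0. if k = i then c k else 0)"
      unfolding Q_def coeff_sum by simp
    also have "\<dots> = (if i \<le> K0 then c i else 0)" by (simp add: sum.delta)
    also have "\<dots> = 0" using trig_deg_ge[of i K0 c] i by auto
    finally show "coeff Q i = 0" .
  qed
  have inj: "inj_on F {..<p ^ K}"
  proof (rule inj_onI)
    fix x y assume x: "x \<in> {..<p ^ K}" and y: "y \<in> {..<p ^ K}" and "F x = F y"
    then obtain n :: int where n: "2 * pi * \<i> * complex_of_real (real x * real p powi (- int K))
       = 2 * pi * \<i> * complex_of_real (real y * real p powi (- int K)) + of_int (2 * n) * pi * \<i>"
      unfolding F_def E_def exp_eq by blast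
    have "complex_of_real (real x * real p powi (- int K))
       = complex_of_real (real y * real p powi (- int K)) + of_int n"
      by (rule cancel_2pii[OF n])
    then have "real x * real p powi (- int K) = real y * real p powi (- int K) + of_int n"
      by (metis of_real_add of_real_of_int_eq of_real_eq_iff)
    then have "real x = real y + of_int n * real (p ^ K)"
      using p by (simp add: power_int_minus field_simps)
    then have e: "int x = int y + n * int (p ^ K)"
      by (metis of_int_eq_iff of_int_of_nat_eq of_int_add of_int_mult)
    have "n = 0"
    proof (rule ccontr)
      assume "n \<noteq> 0"
      then have "\<bar>n\<bar> \<ge> 1" by linarith
      then have "\<bar>n\<bar> * int (p ^ K) \<ge> 1 * int (p ^ K)"
        by (intro mult_right_mono) auto
      then have A: "\<bar>n * int (p ^ K)\<bar> \<ge> int (p ^ K)"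
        by (simp add: abs_mult)
      have xi: "int x < int (p ^ K)" "int y < int (p ^ K)" using x y by auto
      have "\<bar>n * int (p ^ K)\<bar> = \<bar>int x - int y\<bar>" using e by simp
      also have "\<dots> < int (p ^ K)" using xi unfolding abs_less_iff by linarith
      finally show False using A by simp
    qed
    then show "x = y" using e by simp
  qed
  have sub: "F ` {z. z < p ^ K \<and> hf p K0 c K z = 0} \<subseteq> {x. poly Q x = 0}"
    using poly by auto
  have "card {z. z < p ^ K \<and> hf p K0 c K z = 0} = card (F ` {z. z < p ^ K \<and> hf p K0 c K z = 0})"
    by (rule card_image[symmetric]) (rule inj_on_subset[OF inj], auto)
  also have "\<dots> \<le> card {x. poly Q x = 0}"
    by (rule card_mono[OF poly_roots_finite[OF Q0] sub])
  also have "\<dots> \<le> degree Q" by (rule card_poly_roots_bound[OF Q0])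
  finally show ?thesis using deg by simp
qed

lemma counting:
  assumes p2: "p \<ge> 2" and g1: "g K0 c 0 = 1" and K: "K = Suc K'"
    and dv: "\<And>a. a < p ^ K \<Longrightarrow> Gf p K0 c K a \<noteq> 0 \<Longrightarrow> p dvd a"
  shows "(p - 1) * card {a. a < p ^ K \<and> Gf p K0 c K a \<noteq> 0} \<le> trig_deg K0 c"
proof -
  have p: "p > 0" using p2 by simp
  define Gd where "Gd = {a. a < p ^ K \<and> Gf p K0 c K a \<noteq> 0}"
  define Pre where "Pre = {z. z < p ^ K \<and> (p * z) mod p ^ K \<in> Gd}"
  define Bad where "Bad = {z. z < p ^ K \<and> hf p K0 c K z = 0}"
  have pK: "p ^ K > 0" using p by simp
  have finGd: "finite Gd" unfolding Gd_def by simp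
  have finPre: "finite Pre" unfolding Pre_def by simp
  have finBad: "finite Bad" unfolding Bad_def by simp
  have GdPre: "Gd \<subseteq> Pre"
  proof
    fix a assume a: "a \<in> Gd"
    then have "Gf p K0 c K ((p * a) mod p ^ K) \<noteq> 0"
      using G_step[OF p g1 K, of a] unfolding Gd_def by auto
    then show "a \<in> Pre" using a pK unfolding Pre_def Gd_def by auto
  qed
  have PreBad: "Pre - Gd \<subseteq> Bad"
  proof
    fix z assume z: "z \<in> Pre - Gd"
    then have "Gf p K0 c K ((p * z) mod p ^ K) \<noteq> 0" "Gf p K0 c K z = 0" "z < p ^ K"
      unfolding Pre_def Gd_def by auto
    then show "z \<in> Bad" using G_step[OF p g1 K, of z] unfolding Bad_def by auto
  qed
  define f where "f yt = fst yt div p + snd yt * p ^ K'" for yt :: "nat \<times> nat"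
  have fdiv: "f (y, t) mod p ^ K' = y div p" "f (y, t) div p ^ K' = t"
    if "y \<in> Gd" "t < p" for y t
  proof -
    have "y < p * p ^ K'" using that unfolding Gd_def K by simp
    then have yl: "y div p < p ^ K'" by (simp add: less_mult_imp_div_less mult.commute)
    show "f (y, t) mod p ^ K' = y div p" "f (y, t) div p ^ K' = t"
      unfolding f_def using yl p by (simp_all add: div_less)
  qed
  have fin: "f (y, t) \<in> Pre" if y: "y \<in> Gd" and t: "t < p" for y t
  proof -
    have yK: "y < p ^ K" and pd: "p dvd y" using y dv unfolding Gd_def by auto
    have "y < p * p ^ K'" using yK unfolding K by simp
    then have yl: "y div p < p ^ K'" by (simp add: less_mult_imp_div_less mult.commute)
    have "f (y, t) < p ^ K' + t * p ^ K'" unfolding f_def using yl by simp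
    also have "\<dots> = (t + 1) * p ^ K'" by simp
    also have "\<dots> \<le> p * p ^ K'" using t by (intro mult_right_mono) auto
    finally have fl: "f (y, t) < p ^ K" unfolding K by simp
    have "p * f (y, t) = y + t * p ^ K"
      unfolding f_def K using pd by (simp add: algebra_simps)
    then have "(p * f (y, t)) mod p ^ K = y" using yK by simp
    then show ?thesis using fl y unfolding Pre_def by simp
  qed
  have injf: "inj_on f (Gd \<times> {..<p})"
  proof (rule inj_onI, clarify)
    fix y t y' t' assume "y \<in> Gd" "t < p" "y' \<in> Gd" "t' < p" "f (y, t) = f (y', t')"
    moreover have "p dvd y" "p dvd y'" using \<open>y \<in> Gd\<close> \<open>y' \<in> Gd\<close> dv unfolding Gd_def by auto
    ultimately show "y = y' \<and> t = t'"
      using fdiv by (metis dvd_mult_div_cancel lessThan_iff)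
  qed
  have "card Gd * p = card (Gd \<times> {..<p})" by (simp add: card_cartesian_product)
  also have "\<dots> = card (f ` (Gd \<times> {..<p}))" by (rule card_image[symmetric, OF injf])
  also have "\<dots> \<le> card Pre" by (rule card_mono[OF finPre]) (use fin in auto)
  also have "card Pre = card Gd + card (Pre - Gd)"
  proof -
    have "Pre = Gd \<union> (Pre - Gd)" using GdPre by auto
    then have "card Pre = card (Gd \<union> (Pre - Gd))" by simp
    also have "\<dots> = card Gd + card (Pre - Gd)"
      by (rule card_Un_disjoint) (use finGd finPre in auto)
    finally show ?thesis .
  qed
  also have "card (Pre - Gd) \<le> card Bad" by (rule card_mono[OF finBad PreBad])
  also have "card Bad \<le> trig_deg K0 c" unfolding Bad_def by (rule roots_bound[OF p g1])
  finally have "card Gd * p \<le> card Gd + trig_deg K0 c" by simp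
  then show ?thesis unfolding Gd_def[symmetric] by (simp add: algebra_simps diff_mult_distrib2)
qed

lemma powi_le_exp:
  fixes x :: real
  assumes "1 < x" "x powi m \<le> x powi n"
  shows "m \<le> n"
proof (rule ccontr)
  assume "\<not> m \<le> n"
  then have "x powi n < x powi m" using assms(1) by (intro power_int_strict_increasing) auto
  then show False using assms(2) by simp
qed

lemma dig_exists:
  assumes p2: "p \<ge> 2" and a: "a > 0"
  shows "\<exists>i. dig p a i \<noteq> 0"
proof (rule ccontr)
  assume "\<not> (\<exists>i. dig p a i \<noteq> 0)"
  then have "a mod p ^ a = 0" using digit_sum[of p a a, symmetric] by simp
  moreover have "a < p ^ a"
  proof -
    have "a < 2 ^ a" by (rule less_exp)
    also have "\<dots> \<le> p ^ a" using p2 by (rule power_mono) simp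
    finally show ?thesis .
  qed
  ultimately show False using a by simp
qed

lemma support_dvd:
  assumes p2: "p \<ge> 2" and a: "a > 0"
    and nrm: "padic_norm p (padic_pshift (-e) (padic_of_nat p a)) \<le> real p powi M"
    and t: "int t \<le> e - M"
  shows "p ^ t dvd a"
proof -
  define d where "d = padic_pshift (-e) (padic_of_nat p a)"
  define v where "v = (LEAST i. dig p a i \<noteq> 0)"
  have dv: "dig p a v \<noteq> 0" unfolding v_def using dig_exists[OF p2 a] by (rule LeastI_ex)
  have below: "dig p a i = 0" if "i < v" for i
    using that not_less_Least unfolding v_def by blast
  have d_at: "d (int v - e) \<noteq> 0" unfolding d_def pshift_of_nat using dv by simp
  have d_below: "d j = 0" if "j < int v - e" for j
  proof (cases "j + e < 0")
    case True then show ?thesis unfolding d_def pshift_of_nat by simp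
  next
    case False
    then have "nat (j + e) < v" using that by simp
    then show ?thesis unfolding d_def pshift_of_nat using False below by simp
  qed
  have val: "padic_val d = int v - e"
    unfolding padic_val_def
  proof (rule the_equality)
    show "d (int v - e) \<noteq> 0 \<and> (\<forall>j<int v - e. d j = 0)" using d_at d_below by blast
  next
    fix w assume w: "d w \<noteq> 0 \<and> (\<forall>j<w. d j = 0)"
    show "w = int v - e"
    proof (rule ccontr)
      assume "w \<noteq> int v - e"
      then consider "w < int v - e" | "int v - e < w" by linarith
      then show False
      proof cases
        case 1 then show False using w d_below[of w] by simp
      next
        case 2 then show False using w d_at by auto
      qed
    qed
  qed
  have "padic_norm p d = real p powi (- (int v - e))"
    unfolding padic_norm_def val using d_at by auto
  then have "real p powi (e - int v) \<le> real p powi M" using nrm unfolding d_def by simp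
  then have "e - int v \<le> M" by (rule powi_le_exp[rotated]) (use p2 in simp)
  then have tv: "t \<le> v" using t by simp
  have "a mod p ^ t = (\<Sum>i<t. dig p a i * p ^ i)" by (rule digit_sum[symmetric])
  also have "\<dots> = 0" using below tv by simp
  finally show ?thesis by (simp add: mod_eq_0_iff_dvd)
qed

lemma shift_in_Qp:
  assumes "p > 0"
  shows "padic_pshift (-e) (padic_of_nat p a) \<in> Qp p"
  unfolding Qp_def
proof (intro CollectI conjI allI exI[of _ "-e"])
  fix j show "padic_pshift (-e) (padic_of_nat p a) j < p"
    unfolding pshift_of_nat dig_def using assms by simp
next
  fix j show "j < -e \<longrightarrow> padic_pshift (-e) (padic_of_nat p a) j = 0"
    unfolding pshift_of_nat by simp
qed

theorem lemma1:
  fixes p K :: nat and c :: "nat \<Rightarrow> complex" and C :: real and M N :: int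
  assumes "prime p"
    and "trig_poly p K c (\<lambda>_. 0) = 1"
    and "\<forall>xi\<in>Qp p. phi_hat p K c C N xi \<noteq> 0 \<longrightarrow> padic_norm p xi \<le> real p powi M"
  shows "real (card {n::nat. real n < real p powi (M + N) \<and>
            phi_hat p K c C N (padic_pshift (- M) (padic_of_nat p n)) \<noteq> 0})
         \<le> real (trig_deg K c) / (real p - 1)"
proof -
  have p2: "p \<ge> 2" using assms(1) by (simp add: prime_ge_2_nat)
  then have p: "p > 0" by simp
  have P1: "real p > 1" using p2 by simp
  have P0: "real p \<noteq> 0" using p by simp
  have g1: "g K c 0 = 1" using assms(2) g_zero_fun[OF p] by simp
  define S where "S = {n::nat. real n < real p powi (M + N) \<and>
            phi_hat p K c C N (padic_pshift (- M) (padic_of_nat p n)) \<noteq> 0}"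
  have den: "real p - 1 > 0" using P1 by simp
  show ?thesis
  proof (cases "C = 0")
    case True
    then have "S = {}" unfolding S_def phi_hat_def by simp
    then show ?thesis unfolding S_def[symmetric] using den by simp
  next
    case Cne: False
    define L where "L = M + N"
    define K' where "K' = nat L"
    define Kn where "Kn = Suc K'"
    define t where "t = nat (int Kn - L)"
    have tL: "int t = int Kn - L" unfolding t_def Kn_def K'_def by simp
    have KnL: "int Kn \<ge> L + 1" unfolding Kn_def K'_def by simp
    have t1: "t \<ge> 1" using tL KnL by linarith
    define Gd where "Gd = {a. a < p ^ Kn \<and> Gf p K c Kn a \<noteq> 0}"
    have phiG: "phi_hat p K c C N (padic_pshift (-(int Kn - N)) (padic_of_nat p a))
        = complex_of_real C * Gf p K c Kn a" for a
    proof -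
      have "phi_hat p K c C N (padic_pshift (-(int Kn - N)) (padic_of_nat p a))
        = complex_of_real C * (\<Prod>j<Kn. g K c (real a * real p powi (int j - N - (int Kn - N))))"
        by (rule phi_shift[OF p g1]) simp
      then show ?thesis unfolding Gf_def by simp
    qed
    have dvp: "p dvd a" if "a < p ^ Kn" "Gf p K c Kn a \<noteq> 0" for a
    proof (cases "a = 0")
      case True then show ?thesis by simp
    next
      case False
      have "phi_hat p K c C N (padic_pshift (-(int Kn - N)) (padic_of_nat p a)) \<noteq> 0"
        unfolding phiG using Cne that by simp
      then have nrm: "padic_norm p (padic_pshift (-(int Kn - N)) (padic_of_nat p a)) \<le> real p powi M"
        using assms(3) shift_in_Qp[OF p] by blast
      have tt: "int t \<le> (int Kn - N) - M" using tL L_def by simp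
      have a0: "a > 0" using False by simp
      have "p ^ t dvd a" by (rule support_dvd[OF p2 a0 nrm tt])
      moreover have "p dvd p ^ t" using t1 by (intro dvd_power) simp
      ultimately show ?thesis by (metis dvd_trans)
    qed
    have cnt: "(p - 1) * card Gd \<le> trig_deg K c"
      unfolding Gd_def by (rule counting[OF p2 g1 Kn_def dvp])
    have map: "n * p ^ t \<in> Gd" if "n \<in> S" for n
    proof -
      have n1: "real n < real p powi L" and n2: "phi_hat p K c C N (padic_pshift (- M) (padic_of_nat p n)) \<noteq> 0"
        using that unfolding S_def L_def by auto
      have JM: "int Kn \<ge> N + M" using KnL unfolding L_def by linarith
      have pt: "real p powi (int t) * real p powi (int j - int Kn) = real p powi (int j - N - M)" for j
      proof -
        have "real p powi (int t + (int j - int Kn)) = real p powi (int t) * real p powi (int j - int Kn)"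
          by (rule power_int_add) (use P0 in simp)
        moreover have "int t + (int j - int Kn) = int j - N - M" using tL L_def by simp
        ultimately show ?thesis by simp
      qed
      have "phi_hat p K c C N (padic_pshift (- M) (padic_of_nat p n))
          = complex_of_real C * (\<Prod>j<Kn. g K c (real n * real p powi (int j - N - M)))"
        using phi_shift[OF p g1 JM] .
      also have "(\<Prod>j<Kn. g K c (real n * real p powi (int j - N - M))) = Gf p K c Kn (n * p ^ t)"
        unfolding Gf_def
        by (rule prod.cong[OF refl]) (simp add: pt[symmetric] power_int_of_nat mult.assoc)
      finally have "Gf p K c Kn (n * p ^ t) \<noteq> 0" using n2 by auto
      moreover have "n * p ^ t < p ^ Kn"
      proof -
        have "real (n * p ^ t) = real n * real p powi (int t)" by (simp add: power_int_of_nat)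
        also have "\<dots> < real p powi L * real p powi (int t)"
          using n1 P1 by (intro mult_strict_right_mono) auto
        also have "\<dots> = real p powi (int Kn)"
          using power_int_add[of "real p" L "int t"] P0 tL by simp
        also have "\<dots> = real (p ^ Kn)" by (simp add: power_int_of_nat)
        finally show ?thesis by (simp only: of_nat_less_iff)
      qed
      ultimately show ?thesis unfolding Gd_def by simp
    qed
    have inj: "inj_on (\<lambda>n. n * p ^ t) S" by (rule inj_onI) (use p in simp)
    have "card S = card ((\<lambda>n. n * p ^ t) ` S)" by (rule card_image[symmetric, OF inj])
    also have "\<dots> \<le> card Gd" by (rule card_mono) (use map in \<open>auto simp: Gd_def\<close>)
    finally have cS: "card S \<le> card Gd" .
    have "real (p - 1) * real (card S) \<le> real (trig_deg K c)"
    proof -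
      have "(p - 1) * card S \<le> (p - 1) * card Gd" using cS by simp
      then have "(p - 1) * card S \<le> trig_deg K c" using cnt by linarith
      then show ?thesis by (metis of_nat_le_iff of_nat_mult)
    qed
    moreover have "real (p - 1) = real p - 1" using p by (simp add: of_nat_diff)
    ultimately show ?thesis unfolding S_def[symmetric] using den
      by (simp add: pos_le_divide_eq mult.commute)
  qed
qed

end
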